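(* Let $H$ and $G$ be non-abelian simple groups and let $j\colon\mathrm{Aut}(H)\to\mathrm{Aut}(G)$ be an injective homomorphism with $j(\mathrm{Inn}(H))\subseteq\mathrm{Inn}(G)$. Assume $\mathrm{Aut}(G)$ is co-hopfian and $\mathrm{Out}(G)$ is hyperabelian. Let $N=j^{-1}(\mathrm{Inn}(G))$ (a normal subgroup of $\mathrm{Aut}(H)$ containing $\mathrm{Inn}(H)$), let $k\colon\mathrm{Out}(H)\to\mathrm{Out}(G)$ be the homomorphism induced by $j$, and let $\pi\colon\mathrm{Out}(H)=\mathrm{Aut}(H)/\mathrm{Inn}(H)\to\mathrm{Aut}(H)/N$ be the canonical projection. Then $j$ is a localization if and only if the following four conditions hold: (a) for every injective homomorphism $\kappa\colon\mathrm{Aut}(H)\to\mathrm{Aut}(G)$ there exists $\theta\in\mathrm{Aut}(\mathrm{Aut}(G))$ with $\theta\circ j=\kappa$ (i.e. $\mathrm{Aut}(\mathrm{Aut}(G))$ acts transitively, by composition, on the set of monomorphisms $\mathrm{Aut}(H)\to\mathrm{Aut}(G)$); (b) the only $\theta\in\mathrm{Aut}(\mathrm{Aut}(G))$ with $\theta\circ j=j$ is the identity; (c) for every homomorphism $\varphi'\colon\mathrm{Aut}(H)/N\to\mathrm{Aut}(G)$ there exists a unique homomorphism $\psi'\colon\mathrm{Out}(G)\to\mathrm{Aut}(G)$ with $\psi'\circ k=\varphi'\circ\pi$; (d) every homomorphism $\varphi\colon\mathrm{Aut}(H)\to\mathrm{Aut}(G)$ with $\mathrm{Inn}(H)\subseteq\ker\varphi$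 satisfies $N\subseteq\ker\varphi$.
   Context: A group homomorphism $i\colon X\to Y$ is a localization if for every homomorphism $\varphi\colon X\to Y$ there exists a unique homomorphism $\psi\colon Y\to Y$ with $\psi\circ i=\varphi$. A group is co-hopfian if every injective endomorphism is an automorphism. A group $A$ is hyperabelian if every non-trivial quotient of $A$ has a non-trivial abelian normal subgroup. $\mathrm{Out}(X)=\mathrm{Aut}(X)/\mathrm{Inn}(X)$. *)

theory Defs
  imports "HOL-Algebra.Algebra"
begin

definition simple_grp :: "('a, 'c) monoid_scheme \<Rightarrow> bool" where
  "simple_grp G \<longleftrightarrow> group G \<and> carrier G \<noteq> {\<one>\<^bsub>G\<^esub>} \<and>
     (\<forall>K. K \<lhd> G \<longrightarrow> K = {\<one>\<^bsub>G\<^esub>} \<or> K = carrier G)"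

definition nonabelian :: "('a, 'c) monoid_scheme \<Rightarrow> bool" where
  "nonabelian G \<longleftrightarrow> (\<exists>x\<in>carrier G. \<exists>y\<in>carrier G. x \<otimes>\<^bsub>G\<^esub> y \<noteq> y \<otimes>\<^bsub>G\<^esub> x)"

definition Inn :: "('a, 'c) monoid_scheme \<Rightarrow> ('a \<Rightarrow> 'a) set" where
  "Inn G = {(\<lambda>x\<in>carrier G. g \<otimes>\<^bsub>G\<^esub> x \<otimes>\<^bsub>G\<^esub> inv\<^bsub>G\<^esub> g) | g. g \<in> carrier G}"

definition Out :: "('a, 'c) monoid_scheme \<Rightarrow> ('a \<Rightarrow> 'a) set monoid" where
  "Out G = AutoGroup G Mod Inn G"

definition localization ::
  "('x \<Rightarrow> 'y) \<Rightarrow> ('x, 'c) monoid_scheme \<Rightarrow> ('y, 'd) monoid_scheme \<Rightarrow> bool" where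
  "localization i S T \<longleftrightarrow> i \<in> hom S T \<and>
     (\<forall>\<phi>\<in>hom S T.
        (\<exists>\<psi>\<in>hom T T. \<forall>x\<in>carrier S. \<psi> (i x) = \<phi> x) \<and>
        (\<forall>p1\<in>hom T T. \<forall>p2\<in>hom T T.
           (\<forall>x\<in>carrier S. p1 (i x) = \<phi> x) \<longrightarrow> (\<forall>x\<in>carrier S. p2 (i x) = \<phi> x)
           \<longrightarrow> (\<forall>y\<in>carrier T. p1 y = p2 y)))"

definition co_hopfian :: "('a, 'c) monoid_scheme \<Rightarrow> bool" where
  "co_hopfian S \<longleftrightarrow> (\<forall>f\<in>hom S S. inj_on f (carrier S) \<longrightarrow> f \<in> iso S S)"

definition hyperabelian :: "('a, 'c) monoid_scheme \<Rightarrow> bool" where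
  "hyperabelian A \<longleftrightarrow> (\<forall>K. K \<lhd> A \<and> K \<noteq> carrier A \<longrightarrow>
      (\<exists>M. M \<lhd> (A Mod K) \<and> M \<noteq> {\<one>\<^bsub>A Mod K\<^esub>} \<and>
           (\<forall>x\<in>M. \<forall>y\<in>M. x \<otimes>\<^bsub>A Mod K\<^esub> y = y \<otimes>\<^bsub>A Mod K\<^esub> x)))"

end

theory Submission
  imports Defs
begin

definition cj :: "('a, 'c) monoid_scheme \<Rightarrow> 'a \<Rightarrow> ('a \<Rightarrow> 'a)" where
  "cj S g = (\<lambda>x\<in>carrier S. g \<otimes>\<^bsub>S\<^esub> x \<otimes>\<^bsub>S\<^esub> inv\<^bsub>S\<^esub> g)"

lemma Inn_cj: "Inn S = cj S ` carrier S"
  by (auto simp: Inn_def cj_def)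

lemma carrier_Auto: "carrier (AutoGroup S) = auto S"
  by (simp add: AutoGroup_def)

lemma one_Auto: "\<one>\<^bsub>AutoGroup S\<^esub> = (\<lambda>x\<in>carrier S. x)"
  by (simp add: AutoGroup_def BijGroup_def)

lemma mult_Auto: "f \<in> auto S \<Longrightarrow> g \<in> auto S \<Longrightarrow> f \<otimes>\<^bsub>AutoGroup S\<^esub> g = compose (carrier S) f g"
  by (simp add: AutoGroup_def BijGroup_def auto_def)

lemma (in group) inv_cancel_l: "g \<in> carrier G \<Longrightarrow> z \<in> carrier G \<Longrightarrow> inv g \<otimes> (g \<otimes> z) = z"
  by (simp add: m_assoc [symmetric])

lemma (in group) inv_cancel_l2: "g \<in> carrier G \<Longrightarrow> z \<in> carrier G \<Longrightarrow> g \<otimes> (inv g \<otimes> z) = z"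
  by (simp add: m_assoc [symmetric])

lemma (in group) cj_auto: "g \<in> carrier G \<Longrightarrow> cj G g \<in> auto G"
proof -
  assume g: "g \<in> carrier G"
  have "cj G g \<in> carrier (BijGroup (carrier G))"
    using conjugation_is_hom g unfolding cj_def hom_def by blast
  moreover have "cj G g \<in> hom G G"
    using g by (intro homI) (auto simp: cj_def m_assoc inv_mult_group inv_cancel_l)
  ultimately show ?thesis by (simp add: auto_def BijGroup_def)
qed

lemma (in group) cj_hom: "cj G \<in> hom G (AutoGroup G)"
proof (rule homI)
  show "x \<in> carrier G \<Longrightarrow> cj G x \<in> carrier (AutoGroup G)" for x
    by (simp add: carrier_Auto cj_auto)
  show "cj G (x \<otimes> y) = cj G x \<otimes>\<^bsub>AutoGroup G\<^esub> cj G y" if "x \<in> carrier G" "y \<in> carrier G" for x y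
  proof -
    have "cj G x \<otimes>\<^bsub>AutoGroup G\<^esub> cj G y = compose (carrier G) (cj G x) (cj G y)"
      using that by (simp add: mult_Auto cj_auto)
    then show ?thesis
      using that by (auto simp: cj_def compose_def m_assoc inv_mult_group intro!: ext)
  qed
qed

lemma (in group) auto_cj:
  assumes a: "\<alpha> \<in> auto G" and g: "g \<in> carrier G"
  shows "\<alpha> \<otimes>\<^bsub>AutoGroup G\<^esub> cj G g = cj G (\<alpha> g) \<otimes>\<^bsub>AutoGroup G\<^esub> \<alpha>"
proof -
  have h: "\<alpha> \<in> hom G G" using a by (simp add: auto_def)
  then interpret gh: group_hom G G \<alpha> by (unfold_locales) 
  have ag: "\<alpha> g \<in> carrier G" using h g unfolding hom_def by auto
  have 1: "\<alpha> \<otimes>\<^bsub>AutoGroup G\<^esub> cj G g = compose (carrier G) \<alpha> (cj G g)"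
    using a g by (simp add: mult_Auto cj_auto)
  have 2: "cj G (\<alpha> g) \<otimes>\<^bsub>AutoGroup G\<^esub> \<alpha> = compose (carrier G) (cj G (\<alpha> g)) \<alpha>"
    using a ag by (simp add: mult_Auto cj_auto)
  show ?thesis
    unfolding 1 2 using g ag by (auto simp: cj_def compose_def intro!: ext)
qed

lemma (in group) Inn_normal: "Inn G \<lhd> AutoGroup G"
proof -
  interpret AG: group "AutoGroup G" by (rule AutoGroup)
  interpret c: group_hom G "AutoGroup G" "cj G"
    by (unfold_locales) (rule cj_hom)
  show ?thesis
  proof (rule AG.normal_invI)
    show "subgroup (Inn G) (AutoGroup G)" unfolding Inn_cj by (rule c.img_is_subgroup)
    fix x h assume x: "x \<in> carrier (AutoGroup G)" and h: "h \<in> Inn G"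
    then obtain g where g: "g \<in> carrier G" and hg: "h = cj G g" by (auto simp: Inn_cj)
    have xg: "x g \<in> carrier G" using x g by (auto simp: carrier_Auto auto_def hom_def)
    have "x \<otimes>\<^bsub>AutoGroup G\<^esub> h \<otimes>\<^bsub>AutoGroup G\<^esub> inv\<^bsub>AutoGroup G\<^esub> x
        = cj G (x g) \<otimes>\<^bsub>AutoGroup G\<^esub> x \<otimes>\<^bsub>AutoGroup G\<^esub> inv\<^bsub>AutoGroup G\<^esub> x"
      using x g hg auto_cj by (simp add: carrier_Auto)
    also have "\<dots> = cj G (x g)"
      using x xg by (simp add: AG.m_assoc)
    finally show "x \<otimes>\<^bsub>AutoGroup G\<^esub> h \<otimes>\<^bsub>AutoGroup G\<^esub> inv\<^bsub>AutoGroup G\<^esub> x \<in> Inn G"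
      using xg by (simp add: Inn_cj)
  qed
qed

lemma simple_normal_Auto:
  assumes S: "simple_grp S" and K: "K \<lhd> AutoGroup S"
  shows "K = {\<one>\<^bsub>AutoGroup S\<^esub>} \<or> Inn S \<subseteq> K"
proof -
  interpret S: group S using S by (simp add: simple_grp_def)
  interpret AG: group "AutoGroup S" by (rule S.AutoGroup)
  interpret c: group_hom S "AutoGroup S" "cj S"
    by (unfold_locales) (rule S.cj_hom)
  interpret K: normal K "AutoGroup S" by (rule K)
  define L where "L = {g \<in> carrier S. cj S g \<in> K}"
  have "subgroup L S"
  proof
    show "L \<subseteq> carrier S" by (auto simp: L_def)
    show "x \<otimes>\<^bsub>S\<^esub> y \<in> L" if "x \<in> L" "y \<in> L" for x y
      using that by (auto simp: L_def K.m_closed)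
    show "\<one>\<^bsub>S\<^esub> \<in> L" by (auto simp: L_def K.one_closed)
    show "inv\<^bsub>S\<^esub> x \<in> L" if "x \<in> L" for x
      using that by (auto simp: L_def K.m_inv_closed)
  qed
  then have "L \<lhd> S"
  proof (rule S.normal_invI)
    fix x h assume "x \<in> carrier S" "h \<in> L"
    then show "x \<otimes>\<^bsub>S\<^esub> h \<otimes>\<^bsub>S\<^esub> inv\<^bsub>S\<^esub> x \<in> L"
      by (auto simp: L_def K.inv_op_closed2)
  qed
  then have "L = {\<one>\<^bsub>S\<^esub>} \<or> L = carrier S" using S by (simp add: simple_grp_def)
  then show ?thesis
  proof
    assume "L = carrier S"
    then show ?thesis by (auto simp: Inn_cj L_def)
  next
    assume L1: "L = {\<one>\<^bsub>S\<^esub>}"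
    have "K \<subseteq> {\<one>\<^bsub>AutoGroup S\<^esub>}"
    proof
      fix a assume aK: "a \<in> K"
      then have aA: "a \<in> carrier (AutoGroup S)" using K.subset by blast
      then have aauto: "a \<in> auto S" by (simp add: carrier_Auto)
      have fix_inv: "a (inv\<^bsub>S\<^esub> g) = inv\<^bsub>S\<^esub> g" if g: "g \<in> carrier S" for g
      proof -
        have ag: "a (inv\<^bsub>S\<^esub> g) \<in> carrier S" using aauto g by (auto simp: auto_def hom_def)
        have cgA: "cj S g \<in> carrier (AutoGroup S)" using g by simp
        have z: "cj S g \<otimes>\<^bsub>AutoGroup S\<^esub> a \<otimes>\<^bsub>AutoGroup S\<^esub> inv\<^bsub>AutoGroup S\<^esub> (cj S g)
                 \<otimes>\<^bsub>AutoGroup S\<^esub> inv\<^bsub>AutoGroup S\<^esub> a \<in> K"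
          using aK cgA by (simp add: K.inv_op_closed2 K.m_closed K.m_inv_closed)
        have "cj S g \<otimes>\<^bsub>AutoGroup S\<^esub> a \<otimes>\<^bsub>AutoGroup S\<^esub> inv\<^bsub>AutoGroup S\<^esub> (cj S g)
                 \<otimes>\<^bsub>AutoGroup S\<^esub> inv\<^bsub>AutoGroup S\<^esub> a
            = cj S g \<otimes>\<^bsub>AutoGroup S\<^esub> (a \<otimes>\<^bsub>AutoGroup S\<^esub> cj S (inv\<^bsub>S\<^esub> g))
                 \<otimes>\<^bsub>AutoGroup S\<^esub> inv\<^bsub>AutoGroup S\<^esub> a"
          using g aA by (simp add: AG.m_assoc)
        also have "\<dots> = cj S g \<otimes>\<^bsub>AutoGroup S\<^esub> (cj S (a (inv\<^bsub>S\<^esub> g)) \<otimes>\<^bsub>AutoGroup S\<^esub> a)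
                 \<otimes>\<^bsub>AutoGroup S\<^esub> inv\<^bsub>AutoGroup S\<^esub> a"
          using S.auto_cj[OF aauto S.inv_closed[OF g]] g by simp
        also have "\<dots> = cj S (g \<otimes>\<^bsub>S\<^esub> a (inv\<^bsub>S\<^esub> g))"
          using g aA ag by (simp add: AG.m_assoc)
        finally have "g \<otimes>\<^bsub>S\<^esub> a (inv\<^bsub>S\<^esub> g) \<in> L"
          using z g ag by (simp add: L_def)
        then have "g \<otimes>\<^bsub>S\<^esub> a (inv\<^bsub>S\<^esub> g) = \<one>\<^bsub>S\<^esub>" using L1 by simp
        then show ?thesis using g ag
          by (metis S.inv_equality S.l_inv S.inv_closed S.inv_inv S.r_inv S.inv_comm)
      qed
      have "a y = y" if y: "y \<in> carrier S" for y
        using fix_inv[of "inv\<^bsub>S\<^esub> y"] y by simp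
      moreover have "a \<in> extensional (carrier S)" using aauto by (simp add: auto_def Bij_def)
      ultimately have "a = (\<lambda>x\<in>carrier S. x)"
        by (intro ext) (auto simp: extensional_def)
      then show "a \<in> {\<one>\<^bsub>AutoGroup S\<^esub>}" by (simp add: one_Auto)
    qed
    then show ?thesis using K.one_closed by blast
  qed
qed

lemma Inn_nontriv:
  assumes "group S" "nonabelian S"
  shows "\<exists>c\<in>Inn S. c \<noteq> \<one>\<^bsub>AutoGroup S\<^esub>"
proof -
  interpret S: group S by fact
  obtain x y where x: "x \<in> carrier S" and y: "y \<in> carrier S"
    and ne: "x \<otimes>\<^bsub>S\<^esub> y \<noteq> y \<otimes>\<^bsub>S\<^esub> x"
    using assms(2) by (auto simp: nonabelian_def)
  have "cj S x y \<noteq> y"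
  proof
    assume "cj S x y = y"
    then have "x \<otimes>\<^bsub>S\<^esub> y \<otimes>\<^bsub>S\<^esub> inv\<^bsub>S\<^esub> x \<otimes>\<^bsub>S\<^esub> x = y \<otimes>\<^bsub>S\<^esub> x"
      using y by (simp add: cj_def)
    then show False using ne x y by (simp add: S.m_assoc)
  qed
  then have "cj S x \<noteq> \<one>\<^bsub>AutoGroup S\<^esub>" using y by (auto simp: one_Auto)
  then show ?thesis using x by (auto simp: Inn_cj)
qed

lemma hom_Auto_dich:
  assumes S: "simple_grp S" and T: "group T" and h: "\<phi> \<in> hom (AutoGroup S) T"
  shows "inj_on \<phi> (carrier (AutoGroup S)) \<or> Inn S \<subseteq> kernel (AutoGroup S) T \<phi>"
proof -
  interpret S: group S using S by (simp add: simple_grp_def)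
  interpret AG: group "AutoGroup S" by (rule S.AutoGroup)
  interpret gh: group_hom "AutoGroup S" T \<phi>
    using T h AG.is_group by (simp add: group_hom_def group_hom_axioms_def)
  have "kernel (AutoGroup S) T \<phi> = {\<one>\<^bsub>AutoGroup S\<^esub>} \<or> Inn S \<subseteq> kernel (AutoGroup S) T \<phi>"
    using simple_normal_Auto[OF S gh.normal_kernel] .
  then show ?thesis
    by (auto simp: gh.inj_on_one_iff kernel_def)
qed

lemma kill_not_inj:
  assumes "group S" "nonabelian S" "group T" "\<phi> \<in> hom (AutoGroup S) T"
    and "Inn S \<subseteq> kernel (AutoGroup S) T \<phi>"
  shows "\<not> inj_on \<phi> (carrier (AutoGroup S))"
proof -
  interpret S: group S by fact
  interpret AG: group "AutoGroup S" by (rule S.AutoGroup)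
  interpret gh: group_hom "AutoGroup S" T \<phi>
    using assms AG.is_group by (simp add: group_hom_def group_hom_axioms_def)
  obtain c where c: "c \<in> Inn S" "c \<noteq> \<one>\<^bsub>AutoGroup S\<^esub>" using Inn_nontriv assms by blast
  then have "\<phi> c = \<one>\<^bsub>T\<^esub>" "c \<in> carrier (AutoGroup S)" using assms(5) by (auto simp: kernel_def)
  then show ?thesis using c by (auto simp: gh.inj_on_one_iff)
qed

lemma inj_to_Auto:
  assumes "co_hopfian T" "\<psi> \<in> hom T T" "inj_on \<psi> (carrier T)" "group T"
  shows "restrict \<psi> (carrier T) \<in> carrier (AutoGroup T)"
proof -
  have "\<psi> \<in> iso T T" using assms by (simp add: co_hopfian_def)
  then have b: "bij_betw \<psi> (carrier T) (carrier T)" by (simp add: iso_def)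
  have "restrict \<psi> (carrier T) \<in> hom T T" using assms(2,4) by (auto simp: hom_def monoid.m_closed group.is_monoid)
  moreover have "restrict \<psi> (carrier T) \<in> Bij (carrier T)"
    using b by (simp add: Bij_def bij_betw_def inj_on_def)
  ultimately show ?thesis by (simp add: carrier_Auto auto_def)
qed

lemma comp_inj:
  assumes "inj_on \<psi> (carrier B)" "j \<in> hom A B" "inj_on j (carrier A)"
    "\<forall>x\<in>carrier A. \<psi> (j x) = \<phi> x"
  shows "inj_on \<phi> (carrier A)"
proof -
  have "j ` carrier A \<subseteq> carrier B" using assms(2) by (auto simp: hom_def)
  then have "inj_on (\<psi> \<circ> j) (carrier A)"
    using assms by (meson comp_inj_on inj_on_subset)
  then show ?thesis using assms(4) by (simp add: inj_on_def)
qed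

lemma carrier_Mod_ex: "C \<in> carrier (A Mod N) \<Longrightarrow> \<exists>f\<in>carrier A. C = N #>\<^bsub>A\<^esub> f"
  by (auto simp: carrier_FactGroup)

theorem theorem3p3:
  fixes H :: "'a monoid" and G :: "'b monoid"
    and j :: "('a \<Rightarrow> 'a) \<Rightarrow> ('b \<Rightarrow> 'b)"
    and N :: "('a \<Rightarrow> 'a) set"
    and k :: "('a \<Rightarrow> 'a) set \<Rightarrow> ('b \<Rightarrow> 'b) set"
    and \<pi> :: "('a \<Rightarrow> 'a) set \<Rightarrow> ('a \<Rightarrow> 'a) set"
  assumes "simple_grp H" and "nonabelian H"
    and "simple_grp G" and "nonabelian G"
    and "j \<in> hom (AutoGroup H) (AutoGroup G)"
    and "inj_on j (carrier (AutoGroup H))"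
    and "j ` Inn H \<subseteq> Inn G"
    and "co_hopfian (AutoGroup G)"
    and "hyperabelian (Out G)"
    and N_def: "N = {f \<in> carrier (AutoGroup H). j f \<in> Inn G}"
    and k_def: "k = (\<lambda>C. Inn G #>\<^bsub>AutoGroup G\<^esub> j (SOME f. f \<in> C))"
    and \<pi>_def: "\<pi> = (\<lambda>C. N #>\<^bsub>AutoGroup H\<^esub> (SOME f. f \<in> C))"
  shows "localization j (AutoGroup H) (AutoGroup G) \<longleftrightarrow>
    ((\<forall>\<kappa>\<in>hom (AutoGroup H) (AutoGroup G). inj_on \<kappa> (carrier (AutoGroup H)) \<longrightarrow>
        (\<exists>\<theta>\<in>carrier (AutoGroup (AutoGroup G)). \<forall>f\<in>carrier (AutoGroup H). \<theta> (j f) = \<kappa> f))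
   \<and> (\<forall>\<theta>\<in>carrier (AutoGroup (AutoGroup G)).
        (\<forall>f\<in>carrier (AutoGroup H). \<theta> (j f) = j f) \<longrightarrow> \<theta> = \<one>\<^bsub>AutoGroup (AutoGroup G)\<^esub>)
   \<and> (\<forall>\<phi>'\<in>hom (AutoGroup H Mod N) (AutoGroup G).
        (\<exists>\<psi>'\<in>hom (Out G) (AutoGroup G). \<forall>C\<in>carrier (Out H). \<psi>' (k C) = \<phi>' (\<pi> C)) \<and>
        (\<forall>\<psi>1\<in>hom (Out G) (AutoGroup G). \<forall>\<psi>2\<in>hom (Out G) (AutoGroup G).
           (\<forall>C\<in>carrier (Out H). \<psi>1 (k C) = \<phi>' (\<pi> C)) \<longrightarrow>
           (\<forall>C\<in>carrier (Out H). \<psi>2 (k C) = \<phi>' (\<pi> C)) \<longrightarrow>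
           (\<forall>D\<in>carrier (Out G). \<psi>1 D = \<psi>2 D)))
   \<and> (\<forall>\<phi>\<in>hom (AutoGroup H) (AutoGroup G).
        Inn H \<subseteq> kernel (AutoGroup H) (AutoGroup G) \<phi> \<longrightarrow>
        N \<subseteq> kernel (AutoGroup H) (AutoGroup G) \<phi>))"
proof -
  let ?A = "AutoGroup H" and ?B = "AutoGroup G"
  have gH: "group H" and gG: "group G" using assms(1,3) by (simp_all add: simple_grp_def)
  interpret H: group H by (rule gH)
  interpret G: group G by (rule gG)
  interpret A: group ?A by (rule H.AutoGroup)
  interpret B: group ?B by (rule G.AutoGroup)
  interpret J: group_hom ?A ?B j
    using assms(5) A.is_group B.is_group by (simp add: group_hom_def group_hom_axioms_def)
  have nIH: "Inn H \<lhd> ?A" by (rule H.Inn_normal)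
  have nIG: "Inn G \<lhd> ?B" by (rule G.Inn_normal)
  interpret IG: normal "Inn G" ?B by (rule nIG)
  interpret IH: normal "Inn H" ?A by (rule nIH)
  have sIG: "subgroup (Inn G) ?B" by (rule normal_imp_subgroup[OF nIG])
  have sIH: "subgroup (Inn H) ?A" by (rule normal_imp_subgroup[OF nIH])
  have IHA: "Inn H \<subseteq> carrier ?A" by (rule IH.subset)
  have IHN: "Inn H \<subseteq> N" using IHA assms(7) N_def by auto
  have nN: "N \<lhd> ?A"
  proof (rule A.normal_invI)
    show "subgroup N ?A"
    proof (rule subgroup.intro)
      show "N \<subseteq> carrier ?A" unfolding N_def by blast
      show "x \<otimes>\<^bsub>?A\<^esub> y \<in> N" if "x \<in> N" "y \<in> N" for x y
      proof -
        have x: "x \<in> carrier ?A" "j x \<in> Inn G" and y: "y \<in> carrier ?A" "j y \<in> Inn G"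
          using that unfolding N_def by blast+
        have "j (x \<otimes>\<^bsub>?A\<^esub> y) = j x \<otimes>\<^bsub>?B\<^esub> j y" using x y by (simp only: J.hom_mult)
        then have "j (x \<otimes>\<^bsub>?A\<^esub> y) \<in> Inn G" using x y IG.m_closed by metis
        then show ?thesis using x y A.m_closed unfolding N_def by blast
      qed
      show "\<one>\<^bsub>?A\<^esub> \<in> N"
        using IG.one_closed J.hom_one A.one_closed unfolding N_def by simp
      show "inv\<^bsub>?A\<^esub> x \<in> N" if "x \<in> N" for x
      proof -
        have x: "x \<in> carrier ?A" "j x \<in> Inn G" using that unfolding N_def by blast+
        have "j (inv\<^bsub>?A\<^esub> x) = inv\<^bsub>?B\<^esub> j x" using x by (simp only: J.hom_inv)
        then have "j (inv\<^bsub>?A\<^esub> x) \<in> Inn G" using x IG.m_inv_closed by metis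
        then show ?thesis using x A.inv_closed unfolding N_def by blast
      qed
    qed
    fix x h assume "x \<in> carrier ?A" "h \<in> N"
    then have x: "x \<in> carrier ?A" and h: "h \<in> carrier ?A" "j h \<in> Inn G" unfolding N_def by blast+
    have "j (x \<otimes>\<^bsub>?A\<^esub> h \<otimes>\<^bsub>?A\<^esub> inv\<^bsub>?A\<^esub> x) = j x \<otimes>\<^bsub>?B\<^esub> j h \<otimes>\<^bsub>?B\<^esub> inv\<^bsub>?B\<^esub> j x"
      using x h by simp
    then have "j (x \<otimes>\<^bsub>?A\<^esub> h \<otimes>\<^bsub>?A\<^esub> inv\<^bsub>?A\<^esub> x) \<in> Inn G" using IG.inv_op_closed2 x h by simp
    then show "x \<otimes>\<^bsub>?A\<^esub> h \<otimes>\<^bsub>?A\<^esub> inv\<^bsub>?A\<^esub> x \<in> N"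
      using x h unfolding N_def by simp
  qed
  interpret NN: normal N ?A by (rule nN)
  have sN: "subgroup N ?A" by (rule normal_imp_subgroup[OF nN])
  have gOG: "group (Out G)" unfolding Out_def by (rule IG.factorgroup_is_group)
  have gAN: "group (?A Mod N)" by (rule NN.factorgroup_is_group)
  have qG: "(\<lambda>b. Inn G #>\<^bsub>?B\<^esub> b) \<in> hom ?B (Out G)" unfolding Out_def by (rule IG.r_coset_hom_Mod)
  have kC: "k (Inn H #>\<^bsub>?A\<^esub> f) = Inn G #>\<^bsub>?B\<^esub> j f" if f: "f \<in> carrier ?A" for f
  proof -
    let ?g = "SOME g. g \<in> Inn H #>\<^bsub>?A\<^esub> f"
    have "f \<in> Inn H #>\<^bsub>?A\<^esub> f" using f sIH by (rule A.rcos_self)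
    then have g: "?g \<in> Inn H #>\<^bsub>?A\<^esub> f" by (rule someI[of "\<lambda>g. g \<in> Inn H #>\<^bsub>?A\<^esub> f"])
    then obtain i where i: "i \<in> Inn H" and gi: "?g = i \<otimes>\<^bsub>?A\<^esub> f"
      unfolding r_coset_def by blast
    have iA: "i \<in> carrier ?A" using i IHA by blast
    have "j ?g = j i \<otimes>\<^bsub>?B\<^esub> j f" unfolding gi using iA f by (rule J.hom_mult)
    moreover have "j i \<in> Inn G" using i assms(7) by blast
    ultimately have "j ?g \<in> Inn G #>\<^bsub>?B\<^esub> j f" unfolding r_coset_def by blast
    then have "Inn G #>\<^bsub>?B\<^esub> j f = Inn G #>\<^bsub>?B\<^esub> j ?g"
      by (rule B.repr_independence[OF _ J.hom_closed[OF f] sIG])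
    then show ?thesis by (simp add: k_def)
  qed
  have piC: "\<pi> (Inn H #>\<^bsub>?A\<^esub> f) = N #>\<^bsub>?A\<^esub> f" if f: "f \<in> carrier ?A" for f
  proof -
    let ?g = "SOME g. g \<in> Inn H #>\<^bsub>?A\<^esub> f"
    have "f \<in> Inn H #>\<^bsub>?A\<^esub> f" using f sIH by (rule A.rcos_self)
    then have g: "?g \<in> Inn H #>\<^bsub>?A\<^esub> f" by (rule someI[of "\<lambda>g. g \<in> Inn H #>\<^bsub>?A\<^esub> f"])
    then have "?g \<in> N #>\<^bsub>?A\<^esub> f" using IHN unfolding r_coset_def by blast
    then have "N #>\<^bsub>?A\<^esub> f = N #>\<^bsub>?A\<^esub> ?g"
      by (rule A.repr_independence[OF _ f sN])
    then show ?thesis by (simp add: \<pi>_def)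
  qed
  have OH: "Inn H #>\<^bsub>?A\<^esub> f \<in> carrier (Out H)" if "f \<in> carrier ?A" for f
    unfolding Out_def carrier_FactGroup using that by blast
  have OG: "Inn G #>\<^bsub>?B\<^esub> b \<in> carrier (Out G)" if "b \<in> carrier ?B" for b
    unfolding Out_def carrier_FactGroup using that by blast
  have dichB: "inj_on \<psi> (carrier ?B) \<or> Inn G \<subseteq> kernel ?B ?B \<psi>" if "\<psi> \<in> hom ?B ?B" for \<psi>
    using hom_Auto_dich[OF assms(3) B.is_group that] .
  have dichA: "inj_on \<phi> (carrier ?A) \<or> Inn H \<subseteq> kernel ?A ?B \<phi>" if "\<phi> \<in> hom ?A ?B" for \<phi>
    using hom_Auto_dich[OF assms(1) B.is_group that] .
  have notinj: "\<not> inj_on \<phi> (carrier ?A)" if "\<phi> \<in> hom ?A ?B" "Inn H \<subseteq> kernel ?A ?B \<phi>" for \<phi>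
    using kill_not_inj[OF gH assms(2) B.is_group that] .
  have killN: "N \<subseteq> kernel ?A ?B \<phi>"
    if "\<psi> \<in> hom ?B ?B" "Inn G \<subseteq> kernel ?B ?B \<psi>" "\<forall>x\<in>carrier ?A. \<psi> (j x) = \<phi> x" for \<psi> \<phi>
  proof
    fix f assume "f \<in> N"
    then have f: "f \<in> carrier ?A" "j f \<in> Inn G" unfolding N_def by blast+
    then have "\<psi> (j f) = \<one>\<^bsub>?B\<^esub>" using that(2) unfolding kernel_def by blast
    then have "\<phi> f = \<one>\<^bsub>?B\<^esub>" using that(3) f by simp
    then show "f \<in> kernel ?A ?B \<phi>" using f unfolding kernel_def by blast
  qed
  let "?L \<longleftrightarrow> ?R" = ?thesis
  let "?a \<and> ?b \<and> ?c \<and> ?d" = ?R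
  show ?thesis
  proof
    assume loc: ?L
    have ex: "\<exists>\<psi>\<in>hom ?B ?B. \<forall>x\<in>carrier ?A. \<psi> (j x) = \<phi> x" if "\<phi> \<in> hom ?A ?B" for \<phi>
      using loc that unfolding localization_def by blast
    have uq: "\<forall>y\<in>carrier ?B. p1 y = p2 y"
      if "\<phi> \<in> hom ?A ?B" "p1 \<in> hom ?B ?B" "p2 \<in> hom ?B ?B"
        "\<forall>x\<in>carrier ?A. p1 (j x) = \<phi> x" "\<forall>x\<in>carrier ?A. p2 (j x) = \<phi> x" for \<phi> p1 p2
      using loc that unfolding localization_def by blast
    have a: ?a
    proof (intro ballI impI)
      fix \<kappa> assume kh: "\<kappa> \<in> hom ?A ?B" and ki: "inj_on \<kappa> (carrier ?A)"
      obtain \<psi> where ph: "\<psi> \<in> hom ?B ?B" and pe: "\<forall>x\<in>carrier ?A. \<psi> (j x) = \<kappa> x"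
        using ex[OF kh] by blast
      have "inj_on \<psi> (carrier ?B)"
      proof (rule ccontr)
        assume "\<not> ?thesis"
        then have "Inn G \<subseteq> kernel ?B ?B \<psi>" using dichB ph by blast
        then have "Inn H \<subseteq> kernel ?A ?B \<kappa>" using killN[OF ph _ pe] IHN by blast
        then show False using notinj kh ki by blast
      qed
      then have "restrict \<psi> (carrier ?B) \<in> carrier (AutoGroup ?B)"
        using inj_to_Auto assms(8) ph B.is_group by blast
      moreover have "\<forall>f\<in>carrier ?A. restrict \<psi> (carrier ?B) (j f) = \<kappa> f" using pe by simp
      ultimately show "\<exists>\<theta>\<in>carrier (AutoGroup ?B). \<forall>f\<in>carrier ?A. \<theta> (j f) = \<kappa> f" by blast
    qed
    have b: ?b
    proof (intro ballI impI)
      fix \<theta> assume th: "\<theta> \<in> carrier (AutoGroup ?B)" and te: "\<forall>f\<in>carrier ?A. \<theta> (j f) = j f"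
      have thh: "\<theta> \<in> hom ?B ?B" using th by (simp add: carrier_Auto auto_def)
      have idh: "(\<lambda>x\<in>carrier ?B. x) \<in> hom ?B ?B" by (auto simp: hom_def)
      have "\<forall>y\<in>carrier ?B. \<theta> y = (\<lambda>x\<in>carrier ?B. x) y"
        using uq[OF assms(5) thh idh] te by simp
      moreover have "\<theta> \<in> extensional (carrier ?B)" using th by (simp add: carrier_Auto auto_def Bij_def)
      ultimately show "\<theta> = \<one>\<^bsub>AutoGroup ?B\<^esub>" unfolding one_Auto
        by (intro ext) (auto simp: extensional_def)
    qed
    have c: ?c
    proof
      fix \<phi>' assume ph': "\<phi>' \<in> hom (?A Mod N) ?B"
      define \<phi> where "\<phi> = (\<lambda>a. \<phi>' (N #>\<^bsub>?A\<^esub> a))"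
      have ph: "\<phi> \<in> hom ?A ?B" unfolding \<phi>_def using hom_compose[OF NN.r_coset_hom_Mod ph']
        by (simp add: comp_def)
      have killIH: "Inn H \<subseteq> kernel ?A ?B \<phi>"
      proof
        fix f assume f: "f \<in> Inn H"
        then have "N #>\<^bsub>?A\<^esub> f = N" using IHN IHA sN by (intro A.coset_join2) auto
        then have "\<phi> f = \<one>\<^bsub>?B\<^esub>" using hom_one[OF ph' gAN B.is_group] by (simp add: \<phi>_def)
        then show "f \<in> kernel ?A ?B \<phi>" using f IHA by (auto simp: kernel_def)
      qed
      obtain \<psi> where ps: "\<psi> \<in> hom ?B ?B" and pe: "\<forall>x\<in>carrier ?A. \<psi> (j x) = \<phi> x"
        using ex[OF ph] by blast
      have "\<not> inj_on \<psi> (carrier ?B)"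
      proof
        assume "inj_on \<psi> (carrier ?B)"
        then have "inj_on \<phi> (carrier ?A)" using comp_inj assms(5,6) pe by blast
        then show False using notinj[OF ph killIH] by blast
      qed
      then have kG: "Inn G \<subseteq> kernel ?B ?B \<psi>" using dichB ps by blast
      interpret PS: group_hom ?B ?B \<psi>
        using ps B.is_group by (simp add: group_hom_def group_hom_axioms_def)
      obtain \<psi>' where p'h: "\<psi>' \<in> hom (?B Mod Inn G) ?B"
        and p'e: "\<And>b. b \<in> carrier ?B \<Longrightarrow> \<psi>' (Inn G #>\<^bsub>?B\<^esub> b) = \<psi> b"
        using PS.FactGroup_universal_kernel[OF nIG kG] by metis
      have E: "\<forall>C\<in>carrier (Out H). \<psi>' (k C) = \<phi>' (\<pi> C)"
      proof
        fix C assume "C \<in> carrier (Out H)"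
        then obtain f where f: "f \<in> carrier ?A" and C: "C = Inn H #>\<^bsub>?A\<^esub> f"
          unfolding Out_def using carrier_Mod_ex by blast
        show "\<psi>' (k C) = \<phi>' (\<pi> C)" using f C kC piC p'e pe by (simp add: \<phi>_def)
      qed
      have r: "\<forall>x\<in>carrier ?A. \<psi>i (Inn G #>\<^bsub>?B\<^esub> j x) = \<phi> x"
        if "\<forall>C\<in>carrier (Out H). \<psi>i (k C) = \<phi>' (\<pi> C)" for \<psi>i
      proof
        fix x assume x: "x \<in> carrier ?A"
        have "\<psi>i (Inn G #>\<^bsub>?B\<^esub> j x) = \<psi>i (k (Inn H #>\<^bsub>?A\<^esub> x))" using kC[OF x] by simp
        also have "\<dots> = \<phi>' (\<pi> (Inn H #>\<^bsub>?A\<^esub> x))" using that OH[OF x] by blast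
        also have "\<dots> = \<phi> x" using piC[OF x] by (simp add: \<phi>_def)
        finally show "\<psi>i (Inn G #>\<^bsub>?B\<^esub> j x) = \<phi> x" .
      qed
      have U: "\<forall>\<psi>1\<in>hom (Out G) ?B. \<forall>\<psi>2\<in>hom (Out G) ?B.
           (\<forall>C\<in>carrier (Out H). \<psi>1 (k C) = \<phi>' (\<pi> C)) \<longrightarrow>
           (\<forall>C\<in>carrier (Out H). \<psi>2 (k C) = \<phi>' (\<pi> C)) \<longrightarrow>
           (\<forall>D\<in>carrier (Out G). \<psi>1 D = \<psi>2 D)"
      proof (intro ballI impI)
        fix \<psi>1 \<psi>2 D assume h1: "\<psi>1 \<in> hom (Out G) ?B" and h2: "\<psi>2 \<in> hom (Out G) ?B"
          and e1: "\<forall>C\<in>carrier (Out H). \<psi>1 (k C) = \<phi>' (\<pi> C)"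
          and e2: "\<forall>C\<in>carrier (Out H). \<psi>2 (k C) = \<phi>' (\<pi> C)"
          and D: "D \<in> carrier (Out G)"
        have q1: "(\<lambda>b. \<psi>1 (Inn G #>\<^bsub>?B\<^esub> b)) \<in> hom ?B ?B"
          using hom_compose[OF qG h1] by (simp add: comp_def)
        have q2: "(\<lambda>b. \<psi>2 (Inn G #>\<^bsub>?B\<^esub> b)) \<in> hom ?B ?B"
          using hom_compose[OF qG h2] by (simp add: comp_def)
        have eq: "\<forall>y\<in>carrier ?B. \<psi>1 (Inn G #>\<^bsub>?B\<^esub> y) = \<psi>2 (Inn G #>\<^bsub>?B\<^esub> y)"
          using uq[OF ph q1 q2] r[OF e1] r[OF e2] by simp
        obtain y where y: "y \<in> carrier ?B" and Dy: "D = Inn G #>\<^bsub>?B\<^esub> y"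
          using D unfolding Out_def using carrier_Mod_ex by blast
        show "\<psi>1 D = \<psi>2 D" using eq y Dy by simp
      qed
      show "(\<exists>\<psi>'\<in>hom (Out G) ?B. \<forall>C\<in>carrier (Out H). \<psi>' (k C) = \<phi>' (\<pi> C)) \<and>
        (\<forall>\<psi>1\<in>hom (Out G) ?B. \<forall>\<psi>2\<in>hom (Out G) ?B.
           (\<forall>C\<in>carrier (Out H). \<psi>1 (k C) = \<phi>' (\<pi> C)) \<longrightarrow>
           (\<forall>C\<in>carrier (Out H). \<psi>2 (k C) = \<phi>' (\<pi> C)) \<longrightarrow>
           (\<forall>D\<in>carrier (Out G). \<psi>1 D = \<psi>2 D))"
        using E U p'h unfolding Out_def by blast
    qed
    have d: ?d
    proof (intro ballI impI)
      fix \<phi> assume ph: "\<phi> \<in> hom ?A ?B" and kH: "Inn H \<subseteq> kernel ?A ?B \<phi>"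
      obtain \<psi> where ps: "\<psi> \<in> hom ?B ?B" and pe: "\<forall>x\<in>carrier ?A. \<psi> (j x) = \<phi> x"
        using ex[OF ph] by blast
      have "\<not> inj_on \<psi> (carrier ?B)"
      proof
        assume "inj_on \<psi> (carrier ?B)"
        then have "inj_on \<phi> (carrier ?A)" using comp_inj assms(5,6) pe by blast
        then show False using notinj[OF ph kH] by blast
      qed
      then have "Inn G \<subseteq> kernel ?B ?B \<psi>" using dichB ps by blast
      then show "N \<subseteq> kernel ?A ?B \<phi>" using killN ps pe by blast
    qed
    show ?R using a b c d by blast
  next
    assume R: ?R
    then have a: ?a and b: ?b and c: ?c and d: ?d by blast+
    have main: "(\<exists>\<psi>\<in>hom ?B ?B. \<forall>x\<in>carrier ?A. \<psi> (j x) = \<phi> x) \<and>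
       (\<forall>p1\<in>hom ?B ?B. \<forall>p2\<in>hom ?B ?B.
           (\<forall>x\<in>carrier ?A. p1 (j x) = \<phi> x) \<longrightarrow> (\<forall>x\<in>carrier ?A. p2 (j x) = \<phi> x)
           \<longrightarrow> (\<forall>y\<in>carrier ?B. p1 y = p2 y))" if ph: "\<phi> \<in> hom ?A ?B" for \<phi>
    proof (cases "inj_on \<phi> (carrier ?A)")
      case True
      obtain \<theta> where th: "\<theta> \<in> carrier (AutoGroup ?B)" and te: "\<forall>f\<in>carrier ?A. \<theta> (j f) = \<phi> f"
        using a ph True by blast
      have thh: "\<theta> \<in> hom ?B ?B" using th by (simp add: carrier_Auto auto_def)
      have pinj: "inj_on p (carrier ?B)"
        if "p \<in> hom ?B ?B" "\<forall>x\<in>carrier ?A. p (j x) = \<phi> x" for p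
      proof (rule ccontr)
        assume "\<not> ?thesis"
        then have "Inn G \<subseteq> kernel ?B ?B p" using dichB that(1) by blast
        then have "Inn H \<subseteq> kernel ?A ?B \<phi>" using killN[OF that(1) _ that(2)] IHN by blast
        then show False using notinj ph True by blast
      qed
      have U: "\<forall>y\<in>carrier ?B. p1 y = p2 y"
        if h1: "p1 \<in> hom ?B ?B" and h2: "p2 \<in> hom ?B ?B"
          and e1: "\<forall>x\<in>carrier ?A. p1 (j x) = \<phi> x" and e2: "\<forall>x\<in>carrier ?A. p2 (j x) = \<phi> x"
        for p1 p2
      proof -
        let ?q1 = "restrict p1 (carrier ?B)" and ?q2 = "restrict p2 (carrier ?B)"
        have q1: "?q1 \<in> auto ?B"
          using inj_to_Auto[OF assms(8) h1 pinj[OF h1 e1] B.is_group] by (simp add: carrier_Auto)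
        have q2: "?q2 \<in> auto ?B"
          using inj_to_Auto[OF assms(8) h2 pinj[OF h2 e2] B.is_group] by (simp add: carrier_Auto)
        let ?r = "restrict (inv_into (carrier ?B) ?q1) (carrier ?B)"
        have q1h: "?q1 \<in> hom ?B ?B" and q1B: "?q1 \<in> Bij (carrier ?B)" using q1 by (simp_all add: auto_def)
        have q2h: "?q2 \<in> hom ?B ?B" and q2B: "?q2 \<in> Bij (carrier ?B)" using q2 by (simp_all add: auto_def)
        have rh: "?r \<in> hom ?B ?B" by (rule B.restrict_inv_into_hom[OF q1h q1B])
        have rB: "?r \<in> Bij (carrier ?B)" by (rule restrict_inv_into_Bij[OF q1B])
        let ?t = "compose (carrier ?B) ?r ?q2"
        have th2: "?t \<in> hom ?B ?B" using q2h rh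
          by (auto simp: hom_def compose_def Pi_def)
        have tB: "?t \<in> Bij (carrier ?B)" by (rule compose_Bij[OF rB q2B])
        have t: "?t \<in> carrier (AutoGroup ?B)" using th2 tB by (simp add: carrier_Auto auto_def)
        have bij1: "bij_betw ?q1 (carrier ?B) (carrier ?B)" using q1B by (simp add: Bij_def)
        have te2: "\<forall>f\<in>carrier ?A. ?t (j f) = j f"
        proof
          fix f assume f: "f \<in> carrier ?A"
          have jf: "j f \<in> carrier ?B" using f by simp
          have p2B: "p2 (j f) \<in> carrier ?B" using h2 jf unfolding hom_def by blast
          have "p2 (j f) = p1 (j f)" using e1 e2 f by simp
          then have "?t (j f) = inv_into (carrier ?B) ?q1 (?q1 (j f))"
            using jf p2B by (simp add: compose_def)
          also have "\<dots> = j f" using inv_into_f_f[OF bij_betw_imp_inj_on[OF bij1] jf] .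
          finally show "?t (j f) = j f" .
        qed
        then have t1: "?t = \<one>\<^bsub>AutoGroup ?B\<^esub>" using b t by blast
        show "\<forall>y\<in>carrier ?B. p1 y = p2 y"
        proof
          fix y assume y: "y \<in> carrier ?B"
          have p2B: "p2 y \<in> carrier ?B" using h2 y unfolding hom_def by blast
          have "?t y = y" using t1 y by (simp add: one_Auto)
          then have iv: "inv_into (carrier ?B) ?q1 (p2 y) = y" using y p2B by (simp add: compose_def)
          have "?q1 (inv_into (carrier ?B) ?q1 (p2 y)) = p2 y"
          proof -
            have img: "p2 y \<in> ?q1 ` carrier ?B" using bij1 p2B unfolding bij_betw_def by blast
            show ?thesis using f_inv_into_f[OF img] .
          qed
          then show "p1 y = p2 y" using iv y by simp
        qed
      qed
      show ?thesis using thh te U by blast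
    next
      case False
      have "Inn H \<subseteq> kernel ?A ?B \<phi>" using dichA ph False by blast
      then have kN: "N \<subseteq> kernel ?A ?B \<phi>" using d ph by blast
      interpret PH: group_hom ?A ?B \<phi>
        using ph A.is_group B.is_group by (simp add: group_hom_def group_hom_axioms_def)
      obtain \<phi>' where p'h: "\<phi>' \<in> hom (?A Mod N) ?B"
        and p'e: "\<And>x. x \<in> carrier ?A \<Longrightarrow> \<phi>' (N #>\<^bsub>?A\<^esub> x) = \<phi> x"
        using PH.FactGroup_universal_kernel[OF nN kN] by metis
      have cc: "(\<exists>\<psi>'\<in>hom (Out G) ?B. \<forall>C\<in>carrier (Out H). \<psi>' (k C) = \<phi>' (\<pi> C)) \<and>
        (\<forall>\<psi>1\<in>hom (Out G) ?B. \<forall>\<psi>2\<in>hom (Out G) ?B.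
           (\<forall>C\<in>carrier (Out H). \<psi>1 (k C) = \<phi>' (\<pi> C)) \<longrightarrow>
           (\<forall>C\<in>carrier (Out H). \<psi>2 (k C) = \<phi>' (\<pi> C)) \<longrightarrow>
           (\<forall>D\<in>carrier (Out G). \<psi>1 D = \<psi>2 D))"
        using c p'h by blast
      obtain \<psi>' where s'h: "\<psi>' \<in> hom (Out G) ?B" and s'e: "\<forall>C\<in>carrier (Out H). \<psi>' (k C) = \<phi>' (\<pi> C)"
        using cc by blast
      have Ex: "\<exists>\<psi>\<in>hom ?B ?B. \<forall>x\<in>carrier ?A. \<psi> (j x) = \<phi> x"
      proof (intro bexI ballI)
        show "(\<lambda>b. \<psi>' (Inn G #>\<^bsub>?B\<^esub> b)) \<in> hom ?B ?B"
          using hom_compose[OF qG s'h] by (simp add: comp_def)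
        fix x assume x: "x \<in> carrier ?A"
        have "\<psi>' (Inn G #>\<^bsub>?B\<^esub> j x) = \<psi>' (k (Inn H #>\<^bsub>?A\<^esub> x))" using kC[OF x] by simp
        also have "\<dots> = \<phi>' (\<pi> (Inn H #>\<^bsub>?A\<^esub> x))" using s'e OH[OF x] by blast
        also have "\<dots> = \<phi> x" using piC[OF x] p'e[OF x] by simp
        finally show "(\<lambda>b. \<psi>' (Inn G #>\<^bsub>?B\<^esub> b)) (j x) = \<phi> x" by simp
      qed
      have fac: "\<exists>\<psi>i\<in>hom (Out G) ?B. (\<forall>b\<in>carrier ?B. \<psi>i (Inn G #>\<^bsub>?B\<^esub> b) = p b) \<and>
                    (\<forall>C\<in>carrier (Out H). \<psi>i (k C) = \<phi>' (\<pi> C))"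
        if pph: "p \<in> hom ?B ?B" and ppe: "\<forall>x\<in>carrier ?A. p (j x) = \<phi> x" for p
      proof -
        have "\<not> inj_on p (carrier ?B)"
        proof
          assume "inj_on p (carrier ?B)"
          then have "inj_on \<phi> (carrier ?A)" using comp_inj assms(5,6) ppe by blast
          then show False using False by blast
        qed
        then have kG: "Inn G \<subseteq> kernel ?B ?B p" using dichB pph by blast
        interpret P: group_hom ?B ?B p
          using pph B.is_group by (simp add: group_hom_def group_hom_axioms_def)
        obtain \<psi>i where ih: "\<psi>i \<in> hom (?B Mod Inn G) ?B"
          and ie: "\<And>b. b \<in> carrier ?B \<Longrightarrow> \<psi>i (Inn G #>\<^bsub>?B\<^esub> b) = p b"
          using P.FactGroup_universal_kernel[OF nIG kG] by metis
        have "\<forall>C\<in>carrier (Out H). \<psi>i (k C) = \<phi>' (\<pi> C)"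
        proof
          fix C assume "C \<in> carrier (Out H)"
          then obtain f where f: "f \<in> carrier ?A" and C: "C = Inn H #>\<^bsub>?A\<^esub> f"
            unfolding Out_def using carrier_Mod_ex by blast
          have "\<psi>i (k C) = \<psi>i (Inn G #>\<^bsub>?B\<^esub> j f)" using C kC[OF f] by simp
          also have "\<dots> = p (j f)" using ie f by simp
          also have "\<dots> = \<phi> f" using ppe f by blast
          also have "\<dots> = \<phi>' (\<pi> C)" using C piC[OF f] p'e[OF f] by simp
          finally show "\<psi>i (k C) = \<phi>' (\<pi> C)" .
        qed
        moreover have "\<psi>i \<in> hom (Out G) ?B" using ih by (simp add: Out_def)
        ultimately show ?thesis using ie by blast
      qed
      have Un: "\<forall>y\<in>carrier ?B. p1 y = p2 y"
        if h1: "p1 \<in> hom ?B ?B" and h2: "p2 \<in> hom ?B ?B"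
          and e1: "\<forall>x\<in>carrier ?A. p1 (j x) = \<phi> x" and e2: "\<forall>x\<in>carrier ?A. p2 (j x) = \<phi> x"
        for p1 p2
      proof
        fix y assume y: "y \<in> carrier ?B"
        obtain \<psi>1 where i1: "\<psi>1 \<in> hom (Out G) ?B" and f1: "\<forall>b\<in>carrier ?B. \<psi>1 (Inn G #>\<^bsub>?B\<^esub> b) = p1 b"
          and g1: "\<forall>C\<in>carrier (Out H). \<psi>1 (k C) = \<phi>' (\<pi> C)" using fac[OF h1 e1] by blast
        obtain \<psi>2 where i2: "\<psi>2 \<in> hom (Out G) ?B" and f2: "\<forall>b\<in>carrier ?B. \<psi>2 (Inn G #>\<^bsub>?B\<^esub> b) = p2 b"
          and g2: "\<forall>C\<in>carrier (Out H). \<psi>2 (k C) = \<phi>' (\<pi> C)" using fac[OF h2 e2] by blast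
        have "\<forall>D\<in>carrier (Out G). \<psi>1 D = \<psi>2 D" using cc i1 i2 g1 g2 by blast
        then have "\<psi>1 (Inn G #>\<^bsub>?B\<^esub> y) = \<psi>2 (Inn G #>\<^bsub>?B\<^esub> y)" using OG[OF y] by blast
        then show "p1 y = p2 y" using f1 f2 y by simp
      qed
      show ?thesis using Ex Un by blast
    qed
    show ?L unfolding localization_def using assms(5) main by blast
  qed
qed

end
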